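(* Let $\theta_1\in[0,2\pi)$, $d\in\mathbb{Z}_+$, $k\in\mathbb{Z}_+$, and let $\alpha=(\alpha_n)_{n\ge0}\in\mathbb{D}^\infty$ satisfy $(S-e^{-i\theta_1})^d\alpha\in\ell^2$ and $\alpha\in\ell^{2d+2}$. If $F\in A_{2k}$ satisfies $L_{2k}(F)\ge 2(d+1)-2k$, then $$\sup_{N}\Big|\sum_{n=0}^N[\phi_{2k}(F)]_n\Big|<\infty .$$
   Context: $\mathbb{D}$ is the open unit disk, $(S\alpha)_n:=\alpha_{n+1}$ is the shift. $A_{2k}:=\mathbb{C}[x_1,y_1,\dots,x_k,y_k]$; $\phi_{2k}$ is the linear map from $A_{2k}$ to complex sequences defined on monomials by $[\phi_{2k}(\prod_{i=1}^k x_i^{\beta_i}y_i^{\gamma_i})]_n=\prod_{i=1}^k\alpha_{n+\beta_i}\overline{\alpha_{n+\gamma_i}}$. The degree function $L_{2k}:A_{2k}\setminus\{0\}\to\mathbb{N}$ is defined as follows: expand $F$ uniquely as $F=\sum_{s=1}^M C_s\prod_{p=1}^k(x_p-e^{-i\theta_1})^{\beta_{p,s}}(y_p-e^{i\theta_1})^{\gamma_{p,s}}$ with $C_s\ne0$, $\beta_{p,s},\gamma_{p,s}\in\mathbb{N}$, and the exponent tuples $(\beta_{p,s},\gamma_{p,s})_{1\le p\le k}$ distinct for distinct $s$ (Taylor expansion at the point $x_p=e^{-i\theta_1}$, $y_p=e^{i\theta_1}$); then $L_{2k}(F):=\min_{1\le s\le M}\sum_{p=1}^k\big(\min(\beta_{p,s},d)+\min(\gamma_{p,s},d)\big)$.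 *)

theory Defs
  imports "HOL-Analysis.Analysis"
begin

text \<open>Polynomials in A_{2k} = C[x_1,y_1,...,x_k,y_k] are represented by their coefficient
  function in the monomial basis: a monomial prod_p x_p^(b_p) y_p^(g_p) is indexed by the pair
  of exponent lists (b, g), both of length k (list position p-1 corresponds to variable index p).\<close>

definition poly_supp :: "(nat list \<times> nat list \<Rightarrow> complex) \<Rightarrow> (nat list \<times> nat list) set" where
  "poly_supp C = {m. C m \<noteq> 0}"

definition is_poly2k :: "nat \<Rightarrow> (nat list \<times> nat list \<Rightarrow> complex) \<Rightarrow> bool" where
  "is_poly2k k C \<longleftrightarrow> finite (poly_supp C) \<and>
     (\<forall>b g. C (b, g) \<noteq> 0 \<longrightarrow> length b = k \<and> length g = k)"

definition phi2k :: "nat \<Rightarrow> (nat \<Rightarrow> complex) \<Rightarrow> (nat list \<times> nat list \<Rightarrow> complex) \<Rightarrow> nat \<Rightarrow> complex" where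
  "phi2k k \<alpha> C n = (\<Sum>m\<in>poly_supp C. C m *
      (\<Prod>p<k. \<alpha> (n + fst m ! p) * cnj (\<alpha> (n + snd m ! p))))"

text \<open>Coefficients of the Taylor expansion of F at x_p = e^{-i theta}, y_p = e^{i theta},
  written out via the binomial theorem x^b = sum_{b'} (b choose b') (x - c)^{b'} c^{b-b'}.\<close>
definition taylor_coeff :: "real \<Rightarrow> nat \<Rightarrow> (nat list \<times> nat list \<Rightarrow> complex) \<Rightarrow> nat list \<times> nat list \<Rightarrow> complex" where
  "taylor_coeff \<theta> k C bg = (\<Sum>m\<in>poly_supp C. C m *
      (\<Prod>p<k. (of_nat (fst m ! p choose fst bg ! p) * exp (- \<i> * \<theta>) ^ (fst m ! p - fst bg ! p))
             * (of_nat (snd m ! p choose snd bg ! p) * exp (\<i> * \<theta>) ^ (snd m ! p - snd bg ! p))))"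

definition L2k :: "real \<Rightarrow> nat \<Rightarrow> nat \<Rightarrow> (nat list \<times> nat list \<Rightarrow> complex) \<Rightarrow> nat" where
  "L2k \<theta> d k C = Min {(\<Sum>p<k. min (b ! p) d + min (g ! p) d) | b g.
       length b = k \<and> length g = k \<and> taylor_coeff \<theta> k C (b, g) \<noteq> 0}"

definition shift :: "(nat \<Rightarrow> complex) \<Rightarrow> nat \<Rightarrow> complex" where
  "shift \<alpha> n = \<alpha> (Suc n)"

definition shift_minus_pow :: "complex \<Rightarrow> nat \<Rightarrow> (nat \<Rightarrow> complex) \<Rightarrow> nat \<Rightarrow> complex" where
  "shift_minus_pow c d = ((\<lambda>\<beta> n. shift \<beta> n - c * \<beta> n) ^^ d)"

definition in_lp :: "nat \<Rightarrow> (nat \<Rightarrow> complex) \<Rightarrow> bool" where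
  "in_lp p \<alpha> \<longleftrightarrow> summable (\<lambda>n. norm (\<alpha> n) ^ p)"

end

theory Submission
  imports Defs
begin

definition Dop :: "complex \<Rightarrow> (nat \<Rightarrow> complex) \<Rightarrow> nat \<Rightarrow> complex" where
  "Dop c u n = u (Suc n) - c * u n"

lemma smp_eq: "shift_minus_pow c d = (Dop c ^^ d)"
proof -
  have "(\<lambda>\<beta> n. shift \<beta> n - c * \<beta> n) = Dop c"
    by (auto simp: fun_eq_iff shift_def Dop_def)
  then show ?thesis unfolding shift_minus_pow_def by simp
qed

lemma Dop_pow_lin:
  "(Dop c ^^ j) (\<lambda>n. u n + a * v n) = (\<lambda>n. (Dop c ^^ j) u n + a * (Dop c ^^ j) v n)"
proof (induction j)
  case 0 then show ?case by simp
next
  case (Suc j)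
  have "(Dop c ^^ Suc j) (\<lambda>n. u n + a * v n) = Dop c ((Dop c ^^ j) (\<lambda>n. u n + a * v n))" by simp
  also have "\<dots> = Dop c (\<lambda>n. (Dop c ^^ j) u n + a * (Dop c ^^ j) v n)" by (simp only: Suc)
  also have "\<dots> = (\<lambda>n. Dop c ((Dop c ^^ j) u) n + a * Dop c ((Dop c ^^ j) v) n)"
    by (rule ext) (simp only: Dop_def algebra_simps)
  finally show ?case by simp
qed

lemma Dop_pow_Suc': "(Dop c ^^ Suc j) u = (Dop c ^^ j) (Dop c u)"
  by (simp add: funpow_Suc_right del: funpow.simps)

lemma pascal_sum:
  fixes x :: "nat \<Rightarrow> complex"
  shows "(\<Sum>b\<le>m. of_nat (m choose b) * c^(m-b) * (x (Suc b) + c * x b))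
       = (\<Sum>b\<le>Suc m. of_nat (Suc m choose b) * c^(Suc m-b) * x b)"
proof -
  have "(\<Sum>b\<le>m. of_nat (m choose b) * c^(m-b) * (c * x b))
      = (\<Sum>b\<le>m. of_nat (m choose b) * c^(Suc m-b) * x b)"
    by (intro sum.cong refl) (simp add: Suc_diff_le)
  also have "\<dots> = (\<Sum>b\<le>Suc m. of_nat (m choose b) * c^(Suc m-b) * x b)"
    by (simp only: sum.atMost_Suc binomial_eq_0[of m "Suc m"]) simp
  also have "\<dots> = of_nat (m choose 0) * c^(Suc m - 0) * x 0 + (\<Sum>i\<le>m. of_nat (m choose Suc i) * c^(Suc m - Suc i) * x (Suc i))"
    by (rule sum.atMost_Suc_shift)
  finally have A: "(\<Sum>b\<le>m. of_nat (m choose b) * c^(m-b) * (c * x b))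
     = c^(Suc m) * x 0 + (\<Sum>i\<le>m. of_nat (m choose Suc i) * c^(m - i) * x (Suc i))" by simp
  have "(\<Sum>b\<le>Suc m. of_nat (Suc m choose b) * c^(Suc m-b) * x b)
     = of_nat (Suc m choose 0) * c^(Suc m - 0) * x 0 + (\<Sum>i\<le>m. of_nat (Suc m choose Suc i) * c^(Suc m - Suc i) * x (Suc i))"
    by (rule sum.atMost_Suc_shift)
  also have "\<dots> = c^(Suc m) * x 0 + (\<Sum>i\<le>m. of_nat (m choose i) * c^(m-i) * x (Suc i))
        + (\<Sum>i\<le>m. of_nat (m choose Suc i) * c^(m-i) * x (Suc i))"
    by (simp add: sum.distrib algebra_simps)
  finally have B: "(\<Sum>b\<le>Suc m. of_nat (Suc m choose b) * c^(Suc m-b) * x b) = c^(Suc m) * x 0 + (\<Sum>i\<le>m. of_nat (m choose i) * c^(m-i) * x (Suc i))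
        + (\<Sum>i\<le>m. of_nat (m choose Suc i) * c^(m-i) * x (Suc i))" .
  have "(\<Sum>b\<le>m. of_nat (m choose b) * c^(m-b) * (x (Suc b) + c * x b))
     = (\<Sum>b\<le>m. of_nat (m choose b) * c^(m-b) * x (Suc b)) + (\<Sum>b\<le>m. of_nat (m choose b) * c^(m-b) * (c * x b))"
    by (simp add: distrib_left sum.distrib)
  then show ?thesis using A B by simp
qed

lemma shift_expand:
  "u (n + m) = (\<Sum>b\<le>m. of_nat (m choose b) * c^(m-b) * (Dop c ^^ b) u n)"
proof (induction m arbitrary: u)
  case 0 then show ?case by simp
next
  case (Suc m)
  define u' where "u' = (\<lambda>i. u (Suc i))"
  have "u' = (\<lambda>i. Dop c u i + c * u i)" by (simp add: u'_def Dop_def fun_eq_iff)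
  then have D: "(Dop c ^^ b) u' n = (Dop c ^^ Suc b) u n + c * (Dop c ^^ b) u n" for b
    by (simp only: Dop_pow_lin Dop_pow_Suc')
  have "u (n + Suc m) = u' (n + m)" by (simp add: u'_def)
  also have "\<dots> = (\<Sum>b\<le>m. of_nat (m choose b) * c^(m-b) * (Dop c ^^ b) u' n)" by (rule Suc.IH)
  also have "\<dots> = (\<Sum>b\<le>m. of_nat (m choose b) * c^(m-b) * ((Dop c ^^ Suc b) u n + c * (Dop c ^^ b) u n))"
    by (simp only: D)
  also have "\<dots> = (\<Sum>b\<le>Suc m. of_nat (Suc m choose b) * c^(Suc m-b) * (Dop c ^^ b) u n)"
    by (rule pascal_sum[where x = "\<lambda>b. (Dop c ^^ b) u n"])
  finally show ?case .
qed

lemma shift_expand_M: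
  assumes "m \<le> M"
  shows "u (n + m) = (\<Sum>b\<le>M. of_nat (m choose b) * c^(m-b) * (Dop c ^^ b) u n)"
proof -
  have "(\<Sum>b\<le>M. of_nat (m choose b) * c^(m-b) * (Dop c ^^ b) u n)
      = (\<Sum>b\<le>m. of_nat (m choose b) * c^(m-b) * (Dop c ^^ b) u n)"
    using assms by (intro sum.mono_neutral_right) auto
  then show ?thesis using shift_expand[of u n m c] by simp
qed

definition LK :: "nat \<Rightarrow> nat \<Rightarrow> nat list set" where
  "LK M k = {xs. set xs \<subseteq> {..M} \<and> length xs = k}"

lemma finite_LK: "finite (LK M k)"
  unfolding LK_def by (rule finite_lists_length_eq) simp

lemma LK_Suc: "LK M (Suc k) = (\<lambda>(b,bs). b # bs) ` ({..M} \<times> LK M k)"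
proof
  show "LK M (Suc k) \<subseteq> (\<lambda>(b,bs). b # bs) ` ({..M} \<times> LK M k)"
  proof
    fix xs assume "xs \<in> LK M (Suc k)"
    then obtain b bs where "xs = b # bs" "length bs = k" "set xs \<subseteq> {..M}"
      unfolding LK_def by (auto simp: length_Suc_conv)
    then show "xs \<in> (\<lambda>(b,bs). b # bs) ` ({..M} \<times> LK M k)"
      unfolding LK_def by (auto intro!: image_eqI[where x="(b,bs)"])
  qed
  show "(\<lambda>(b,bs). b # bs) ` ({..M} \<times> LK M k) \<subseteq> LK M (Suc k)"
    unfolding LK_def by auto
qed

lemma prod_sum_lists:
  fixes f :: "nat \<Rightarrow> nat \<Rightarrow> complex"
  shows "(\<Prod>p<k. \<Sum>b\<le>M. f p b) = (\<Sum>bs\<in>LK M k. \<Prod>p<k. f p (bs!p))"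
proof (induction k arbitrary: f)
  case 0
  have "LK M 0 = {[]}" unfolding LK_def by auto
  then show ?case by simp
next
  case (Suc k)
  have inj: "inj_on (\<lambda>(b,bs). b # bs) ({..M} \<times> LK M k)" by (auto simp: inj_on_def)
  have "(\<Prod>p<Suc k. \<Sum>b\<le>M. f p b) = (\<Sum>b\<le>M. f 0 b) * (\<Prod>p<k. \<Sum>b\<le>M. f (Suc p) b)"
    by (rule prod.lessThan_Suc_shift)
  also have "\<dots> = (\<Sum>b\<le>M. f 0 b) * (\<Sum>bs\<in>LK M k. \<Prod>p<k. f (Suc p) (bs!p))"
    using Suc.IH[of "\<lambda>p. f (Suc p)"] by simp
  also have "\<dots> = (\<Sum>(b,bs)\<in>{..M} \<times> LK M k. f 0 b * (\<Prod>p<k. f (Suc p) (bs!p)))"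
    by (simp add: sum_product sum.cartesian_product)
  also have "\<dots> = (\<Sum>(b,bs)\<in>{..M} \<times> LK M k. \<Prod>p<Suc k. f p ((b#bs)!p))"
    by (intro sum.cong refl) (auto simp del: prod.lessThan_Suc simp add: prod.lessThan_Suc_shift)
  also have "\<dots> = (\<Sum>xs\<in>LK M (Suc k). \<Prod>p<Suc k. f p (xs!p))"
    unfolding LK_Suc using sum.reindex[OF inj, of "\<lambda>xs. \<Prod>p<Suc k. f p (xs!p)"]
    by (simp add: case_prod_beta comp_def del: prod.lessThan_Suc)
  finally show ?case .
qed

lemma cnj_c: "cnj (exp (- \<i> * of_real \<theta>)) = exp (\<i> * of_real \<theta>)"
  by (simp add: exp_cnj)

lemma phi_expand:
  fixes \<theta> :: real and \<alpha> :: "nat \<Rightarrow> complex"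
  assumes M: "\<forall>m\<in>poly_supp C. \<forall>p<k. fst m ! p \<le> M \<and> snd m ! p \<le> M"
  shows "phi2k k \<alpha> C n = (\<Sum>bg\<in>LK M k \<times> LK M k. taylor_coeff \<theta> k C bg *
     (\<Prod>p<k. (Dop (exp (- \<i> * \<theta>)) ^^ (fst bg ! p)) \<alpha> n * cnj ((Dop (exp (- \<i> * \<theta>)) ^^ (snd bg ! p)) \<alpha> n)))"
proof -
  define c where "c = exp (- \<i> * of_real \<theta>)"
  have cc: "cnj c = exp (\<i> * of_real \<theta>)" unfolding c_def by (rule cnj_c)
  define Dv where "Dv b = (Dop c ^^ b) \<alpha> n" for b
  define cA where "cA m p b = of_nat (fst m!p choose b) * c^(fst m!p - b)" for m :: "nat list \<times> nat list" and p b
  define cB where "cB m p g = of_nat (snd m!p choose g) * cnj c^(snd m!p - g)" for m :: "nat list \<times> nat list" and p g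
  have fin: "finite (LK M k)" by (rule finite_LK)
  have step1: "(\<Prod>p<k. \<alpha> (n + fst m ! p) * cnj (\<alpha> (n + snd m ! p)))
      = (\<Sum>bg\<in>LK M k \<times> LK M k. (\<Prod>p<k. cA m p (fst bg!p) * cB m p (snd bg!p)) *
             (\<Prod>p<k. Dv (fst bg ! p) * cnj (Dv (snd bg ! p))))" if mS: "m \<in> poly_supp C" for m
  proof -
    have "(\<Prod>p<k. \<alpha> (n + fst m ! p) * cnj (\<alpha> (n + snd m ! p)))
       = (\<Prod>p<k. (\<Sum>b\<le>M. cA m p b * Dv b) * (\<Sum>g\<le>M. cB m p g * cnj (Dv g)))"
    proof (intro prod.cong refl)
      fix p assume "p \<in> {..<k}"
      then have le: "fst m ! p \<le> M" "snd m ! p \<le> M" using M mS by auto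
      have e1: "\<alpha> (n + fst m ! p) = (\<Sum>b\<le>M. cA m p b * Dv b)"
        unfolding cA_def Dv_def by (rule shift_expand_M[OF le(1)])
      have e2: "\<alpha> (n + snd m ! p) = (\<Sum>g\<le>M. of_nat (snd m!p choose g) * c^(snd m!p - g) * Dv g)"
        unfolding Dv_def by (rule shift_expand_M[OF le(2)])
      have e3: "cnj (\<alpha> (n + snd m ! p)) = (\<Sum>g\<le>M. cB m p g * cnj (Dv g))"
        unfolding e2 cB_def by (simp add: cnj_sum)
      show "\<alpha> (n + fst m ! p) * cnj (\<alpha> (n + snd m ! p)) = (\<Sum>b\<le>M. cA m p b * Dv b) * (\<Sum>g\<le>M. cB m p g * cnj (Dv g))"
        using e1 e3 by simp
    qed
    also have "\<dots> = (\<Prod>p<k. \<Sum>b\<le>M. cA m p b * Dv b) * (\<Prod>p<k. \<Sum>g\<le>M. cB m p g * cnj (Dv g))"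
      by (rule prod.distrib)
    also have "\<dots> = (\<Sum>bs\<in>LK M k. \<Prod>p<k. cA m p (bs!p) * Dv (bs!p)) * (\<Sum>gs\<in>LK M k. \<Prod>p<k. cB m p (gs!p) * cnj (Dv (gs!p)))"
      by (simp only: prod_sum_lists)
    also have "\<dots> = (\<Sum>bg\<in>LK M k \<times> LK M k. (\<Prod>p<k. cA m p (fst bg!p) * Dv (fst bg!p)) * (\<Prod>p<k. cB m p (snd bg!p) * cnj (Dv (snd bg!p))))"
      by (simp add: sum_product sum.cartesian_product case_prod_beta)
    also have "\<dots> = (\<Sum>bg\<in>LK M k \<times> LK M k. (\<Prod>p<k. cA m p (fst bg!p) * cB m p (snd bg!p)) *
             (\<Prod>p<k. Dv (fst bg ! p) * cnj (Dv (snd bg ! p))))"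
    proof (intro sum.cong refl)
      fix bg :: "nat list \<times> nat list"
      show "(\<Prod>p<k. cA m p (fst bg!p) * Dv (fst bg!p)) * (\<Prod>p<k. cB m p (snd bg!p) * cnj (Dv (snd bg!p)))
         = (\<Prod>p<k. cA m p (fst bg!p) * cB m p (snd bg!p)) * (\<Prod>p<k. Dv (fst bg ! p) * cnj (Dv (snd bg ! p)))"
        by (simp only: prod.distrib[symmetric]) (simp only: ac_simps)
    qed
    finally show ?thesis .
  qed
  have "phi2k k \<alpha> C n = (\<Sum>m\<in>poly_supp C. C m * (\<Sum>bg\<in>LK M k \<times> LK M k. (\<Prod>p<k. cA m p (fst bg!p) * cB m p (snd bg!p)) *
             (\<Prod>p<k. Dv (fst bg ! p) * cnj (Dv (snd bg ! p)))))"
    unfolding phi2k_def by (intro sum.cong refl) (simp add: step1)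
  also have "\<dots> = (\<Sum>bg\<in>LK M k \<times> LK M k. \<Sum>m\<in>poly_supp C. C m * ((\<Prod>p<k. cA m p (fst bg!p) * cB m p (snd bg!p)) *
             (\<Prod>p<k. Dv (fst bg ! p) * cnj (Dv (snd bg ! p)))))"
    by (simp add: sum_distrib_left sum.swap[of _ "poly_supp C"])
  also have "\<dots> = (\<Sum>bg\<in>LK M k \<times> LK M k. taylor_coeff \<theta> k C bg * (\<Prod>p<k. Dv (fst bg ! p) * cnj (Dv (snd bg ! p))))"
  proof (intro sum.cong refl)
    fix bg :: "nat list \<times> nat list"
    have "taylor_coeff \<theta> k C bg = (\<Sum>m\<in>poly_supp C. C m * (\<Prod>p<k. cA m p (fst bg!p) * cB m p (snd bg!p)))"
      unfolding taylor_coeff_def cA_def cB_def c_def by (simp add: exp_cnj)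
    then show "(\<Sum>m\<in>poly_supp C. C m * ((\<Prod>p<k. cA m p (fst bg!p) * cB m p (snd bg!p)) *
             (\<Prod>p<k. Dv (fst bg ! p) * cnj (Dv (snd bg ! p)))))
       = taylor_coeff \<theta> k C bg * (\<Prod>p<k. Dv (fst bg ! p) * cnj (Dv (snd bg ! p)))"
      by (simp add: sum_distrib_right mult.assoc)
  qed
  finally show ?thesis unfolding Dv_def c_def by simp
qed

lemma amgm3:
  fixes A B C w1 w2 w3 :: real
  assumes "A \<ge> 0" "B \<ge> 0" "C \<ge> 0" "w1 > 0" "w2 > 0" "w3 > 0" "w1 + w2 + w3 = 1"
  shows "A powr w1 * B powr w2 * C powr w3 \<le> w1*A + w2*B + w3*C"
proof (cases "A = 0 \<or> B = 0 \<or> C = 0")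
  case True
  then have z: "A powr w1 * B powr w2 * C powr w3 = 0" by auto
  have "0 \<le> w1*A + w2*B + w3*C" using assms by simp
  then show ?thesis by (simp only: z)
next
  case False
  hence pos: "A > 0" "B > 0" "C > 0" using assms by auto
  define s where "s = w1 + w2"
  have s: "s > 0" "s + w3 = 1" using assms by (auto simp: s_def)
  define X where "X = (w1/s)*A + (w2/s)*B"
  have X: "X > 0" using pos assms s by (auto simp: X_def intro!: add_pos_pos mult_pos_pos)
  have ws: "w1/s + w2/s = 1" using s by (simp add: s_def add_divide_distrib[symmetric])
  have y1: "A powr (w1/s) * B powr (w2/s) \<le> X"
    unfolding X_def using Youngs_inequality_0[of "w1/s" "w2/s" A B] pos assms s ws by simp
  have "A powr w1 * B powr w2 = (A powr (w1/s) * B powr (w2/s)) powr s"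
    using pos s by (simp add: powr_mult powr_powr)
  also have "\<dots> \<le> X powr s" by (rule powr_mono2) (use s pos y1 in auto)
  finally have "A powr w1 * B powr w2 \<le> X powr s" .
  hence "A powr w1 * B powr w2 * C powr w3 \<le> X powr s * C powr w3" by (rule mult_right_mono) simp
  also have "\<dots> \<le> s*X + w3*C" using Youngs_inequality_0[of s w3 X C] s X pos assms by simp
  also have "s * X = w1*A + w2*B" using s by (simp add: X_def field_simps)
  finally show ?thesis by simp
qed

lemma holder3:
  fixes x y z :: "'a \<Rightarrow> real"
  assumes fin: "finite I" and nn: "\<And>i. i\<in>I \<Longrightarrow> x i \<ge> 0 \<and> y i \<ge> 0 \<and> z i \<ge> 0"
    and w: "w1 > 0" "w2 > 0" "w3 > 0" "w1 + w2 + w3 = 1"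
  shows "(\<Sum>i\<in>I. x i * y i * z i) \<le> (\<Sum>i\<in>I. x i powr (1/w1)) powr w1
     * (\<Sum>i\<in>I. y i powr (1/w2)) powr w2 * (\<Sum>i\<in>I. z i powr (1/w3)) powr w3"
proof -
  define SX where "SX = (\<Sum>i\<in>I. x i powr (1/w1))"
  define SY where "SY = (\<Sum>i\<in>I. y i powr (1/w2))"
  define SZ where "SZ = (\<Sum>i\<in>I. z i powr (1/w3))"
  have S0: "SX \<ge> 0" "SY \<ge> 0" "SZ \<ge> 0" unfolding SX_def SY_def SZ_def by (auto intro: sum_nonneg)
  have R0: "0 \<le> SX powr w1 * SY powr w2 * SZ powr w3" by simp
  show ?thesis
  proof (cases "SX = 0 \<or> SY = 0 \<or> SZ = 0")
    case True
    have "\<forall>i\<in>I. x i * y i * z i = 0"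
    proof
      fix i assume i: "i \<in> I"
      from True show "x i * y i * z i = 0"
      proof (elim disjE)
        assume "SX = 0"
        then have "x i powr (1/w1) = 0" using sum_nonneg_eq_0_iff[OF fin, of "\<lambda>i. x i powr (1/w1)"] i
          unfolding SX_def by auto
        then show ?thesis by simp
      next
        assume "SY = 0"
        then have "y i powr (1/w2) = 0" using sum_nonneg_eq_0_iff[OF fin, of "\<lambda>i. y i powr (1/w2)"] i
          unfolding SY_def by auto
        then show ?thesis by simp
      next
        assume "SZ = 0"
        then have "z i powr (1/w3) = 0" using sum_nonneg_eq_0_iff[OF fin, of "\<lambda>i. z i powr (1/w3)"] i
          unfolding SZ_def by auto
        then show ?thesis by simp
      qed
    qed
    then have "(\<Sum>i\<in>I. x i * y i * z i) = 0" by (intro sum.neutral) auto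
    then show ?thesis using R0 unfolding SX_def SY_def SZ_def by simp
  next
    case False
    then have P: "SX > 0" "SY > 0" "SZ > 0" using S0 by auto
    define K where "K = SX powr w1 * SY powr w2 * SZ powr w3"
    have inv: "(v powr (1/w) / S) powr w = v / S powr w" if "v \<ge> 0" "w > 0" for v w S :: real
      using that by (simp add: powr_divide powr_powr)
    have pt: "x i * y i * z i \<le> K * (w1 * (x i powr (1/w1) / SX) + w2 * (y i powr (1/w2) / SY) + w3 * (z i powr (1/w3) / SZ))"
      if i: "i \<in> I" for i
    proof -
      have "x i * y i * z i = K * ((x i powr (1/w1) / SX) powr w1 * (y i powr (1/w2) / SY) powr w2 * (z i powr (1/w3) / SZ) powr w3)"
        using nn[OF i] w P by (simp add: inv K_def field_simps)
      also have "\<dots> \<le> K * (w1 * (x i powr (1/w1) / SX) + w2 * (y i powr (1/w2) / SY) + w3 * (z i powr (1/w3) / SZ))"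
        by (intro mult_left_mono amgm3) (use w P in \<open>auto simp: K_def\<close>)
      finally show ?thesis .
    qed
    have "(\<Sum>i\<in>I. x i * y i * z i) \<le> (\<Sum>i\<in>I. K * (w1 * (x i powr (1/w1) / SX) + w2 * (y i powr (1/w2) / SY) + w3 * (z i powr (1/w3) / SZ)))"
      by (rule sum_mono) (rule pt)
    also have "\<dots> = K * (w1 * (\<Sum>i\<in>I. x i powr (1/w1) / SX) + w2 * (\<Sum>i\<in>I. y i powr (1/w2) / SY) + w3 * (\<Sum>i\<in>I. z i powr (1/w3) / SZ))"
      by (simp only: sum_distrib_left[symmetric] sum.distrib)
    also have "(\<Sum>i\<in>I. x i powr (1/w1) / SX) = 1"
      unfolding sum_divide_distrib[symmetric] SX_def[symmetric] using P by simp
    also have "(\<Sum>i\<in>I. y i powr (1/w2) / SY) = 1"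
      unfolding sum_divide_distrib[symmetric] SY_def[symmetric] using P by simp
    also have "(\<Sum>i\<in>I. z i powr (1/w3) / SZ) = 1"
      unfolding sum_divide_distrib[symmetric] SZ_def[symmetric] using P by simp
    also have "K * (w1 * 1 + w2 * 1 + w3 * 1) = K" using w by simp
    finally show ?thesis unfolding K_def SX_def SY_def SZ_def .
  qed
qed

lemma tangent1:
  fixes x y q :: real assumes "x > 0" "y > 0" "q \<ge> 1"
  shows "y powr q - x powr q \<le> q * y powr (q-1) * (y - x)"
proof -
  have "(y powr q) powr ((q-1)/q) * (x powr q) powr (1/q) \<le> ((q-1)/q) * y powr q + (1/q) * x powr q"
    by (rule Youngs_inequality_0) (use assms in \<open>auto simp: field_simps\<close>)
  moreover have "(y powr q) powr ((q-1)/q) = y powr (q-1)" "(x powr q) powr (1/q) = x"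
    using assms by (auto simp: powr_powr)
  ultimately have "y powr (q-1) * x \<le> ((q-1)/q) * y powr q + (1/q) * x powr q" by simp
  then have h0: "q * (y powr (q-1) * x) \<le> q * (((q-1)/q) * y powr q + (1/q) * x powr q)"
    using assms by (intro mult_left_mono) auto
  have e0: "q * (((q-1)/q) * Y + (1/q) * X) = q * Y - Y + X" for X Y :: real
    using assms by (simp add: field_simps)
  have h: "q * (y powr (q-1) * x) \<le> q * y powr q - y powr q + x powr q"
    using h0 e0 by simp
  have "y * y powr (q-1) = y powr q" using assms powr_mult_base[of y "q-1"] by simp
  then have "q * y powr (q-1) * (y - x) = q * y powr q - q * (y powr (q-1) * x)"
    by (simp add: algebra_simps)
  then show ?thesis using h by linarith
qed

lemma tangent2:
  fixes x y q :: real assumes "x > 0" "y > 0" "q > 0" "q < 1"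
  shows "y powr q - x powr q \<le> q * x powr (q-1) * (y - x)"
proof -
  have "(x powr q) powr (1-q) * (x powr (q-1) * y) powr q \<le> (1-q) * x powr q + q * (x powr (q-1) * y)"
    by (rule Youngs_inequality_0) (use assms in auto)
  moreover have "(x powr q) powr (1-q) * (x powr (q-1) * y) powr q = y powr q"
  proof -
    have "(x powr q) powr (1-q) * (x powr (q-1) * y) powr q
        = x powr (q*(1-q)) * (x powr ((q-1)*q) * y powr q)"
      using assms by (simp add: powr_powr powr_mult)
    also have "\<dots> = x powr (q*(1-q) + (q-1)*q) * y powr q"
      by (simp add: powr_add)
    also have "q*(1-q) + (q-1)*q = 0" by (simp add: algebra_simps)
    finally show ?thesis using assms by simp
  qed
  ultimately have h: "y powr q \<le> (1-q) * x powr q + q * (x powr (q-1) * y)" by simp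
  have "x * x powr (q-1) = x powr q" using assms powr_mult_base[of x "q-1"] by simp
  then have "q * x powr (q-1) * (y - x) = q * (x powr (q-1) * y) - q * x powr q"
    by (simp add: algebra_simps)
  moreover have "(1-q) * x powr q = x powr q - q * x powr q" by (simp add: left_diff_distrib)
  ultimately show ?thesis using h by linarith
qed

lemma pow_diff_lip:
  fixes a b q :: real assumes a: "a \<ge> 0" and b: "b \<ge> 0" and q: "q > 0"
  shows "b * \<bar>a powr q - b powr q\<bar> \<le> (1 + q) * \<bar>a - b\<bar> * (a powr q + b powr q)"
proof -
  have nn: "0 \<le> a powr q" "0 \<le> b powr q" by auto
  consider "b = 0" | "a = 0" "b > 0" | "a > 0" "b > 0" "b \<le> a" | "a > 0" "b > 0" "a < b"
    using a b by fastforce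
  then show ?thesis
  proof cases
    case 1 then show ?thesis using nn q by simp
  next
    case 2
    then have "b * \<bar>a powr q - b powr q\<bar> = b * b powr q" by simp
    also have "\<dots> \<le> (1 + q) * b * b powr q" using 2 q nn by (simp add: algebra_simps)
    finally show ?thesis using 2 by simp
  next
    case 3
    then have ge: "a powr q \<ge> b powr q" using q by (intro powr_mono2) auto
    have key: "b * (a powr q - b powr q) \<le> q * (a - b) * a powr q"
    proof (cases "q \<ge> 1")
      case True
      have "b * (a powr q - b powr q) \<le> b * (q * a powr (q-1) * (a - b))"
        using tangent1[of b a q] 3 True by (intro mult_left_mono) auto
      also have "\<dots> \<le> a * (q * a powr (q-1) * (a - b))"
        using 3 q by (intro mult_right_mono) auto
      also have "a * a powr (q-1) = a powr q" using 3 powr_mult_base[of a "q-1"] by simp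
      then have "a * (q * a powr (q-1) * (a - b)) = q * (a - b) * a powr q" by (simp add: algebra_simps)
      finally show ?thesis .
    next
      case False
      have "b * (a powr q - b powr q) \<le> b * (q * b powr (q-1) * (a - b))"
        using tangent2[of b a q] 3 False q by (intro mult_left_mono) auto
      also have "b * b powr (q-1) = b powr q" using 3 powr_mult_base[of b "q-1"] by simp
      then have "b * (q * b powr (q-1) * (a - b)) = q * (a - b) * b powr q" by (simp add: algebra_simps)
      also have "\<dots> \<le> q * (a - b) * a powr q" using 3 q ge by (intro mult_left_mono) auto
      finally show ?thesis .
    qed
    have "b * \<bar>a powr q - b powr q\<bar> = b * (a powr q - b powr q)" using ge by simp
    also have "\<dots> \<le> q * (a - b) * a powr q" by (rule key)
    also have "\<dots> \<le> (1 + q) * \<bar>a - b\<bar> * (a powr q + b powr q)"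
      using 3 q nn by (intro mult_mono) auto
    finally show ?thesis .
  next
    case 4
    then have ge: "b powr q \<ge> a powr q" using q by (intro powr_mono2) auto
    have key: "b * (b powr q - a powr q) \<le> q * (b - a) * b powr q + (b - a) * b powr q"
    proof (cases "q \<ge> 1")
      case True
      have "b * (b powr q - a powr q) \<le> b * (q * b powr (q-1) * (b - a))"
        using tangent1[of a b q] 4 True by (intro mult_left_mono) auto
      also have "b * b powr (q-1) = b powr q" using 4 powr_mult_base[of b "q-1"] by simp
      then have "b * (q * b powr (q-1) * (b - a)) = q * (b - a) * b powr q" by (simp add: algebra_simps)
      finally have "b * (b powr q - a powr q) \<le> q * (b - a) * b powr q" .
      moreover have "0 \<le> (b - a) * b powr q" using 4 by simp
      ultimately show ?thesis by linarith
    next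
      case False
      have m: "b powr (q-1) \<le> a powr (q-1)" using 4 False by (intro powr_mono2') auto
      have e1: "b * b powr (q-1) = b powr q" using 4 powr_mult_base[of b "q-1"] by simp
      have e2: "a * a powr (q-1) = a powr q" using 4 powr_mult_base[of a "q-1"] by simp
      have "a * b powr q = a * b * b powr (q-1)" using e1 by (simp add: algebra_simps)
      also have "\<dots> \<le> a * b * a powr (q-1)" using m 4 by (intro mult_left_mono) auto
      also have "\<dots> = b * a powr q" using e2 by (simp add: algebra_simps)
      finally have "a * b powr q \<le> b * a powr q" .
      moreover have "b * (b powr q - a powr q) - (b - a) * b powr q = a * b powr q - b * a powr q"
        by (simp add: algebra_simps)
      ultimately have "b * (b powr q - a powr q) \<le> (b - a) * b powr q" by (smt (verit))
      moreover have "0 \<le> q * (b - a) * b powr q" using 4 q by simp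
      ultimately show ?thesis by linarith
    qed
    have "b * \<bar>a powr q - b powr q\<bar> = b * (b powr q - a powr q)" using ge by simp
    also have "\<dots> \<le> (1 + q) * (b - a) * b powr q"
    proof -
      have "(1 + q) * (b - a) * b powr q = q * (b - a) * b powr q + (b - a) * b powr q"
        by (simp add: algebra_simps)
      then show ?thesis using key by linarith
    qed
    also have "\<dots> \<le> (1 + q) * \<bar>a - b\<bar> * (a powr q + b powr q)"
      using 4 q nn by (intro mult_mono) auto
    finally show ?thesis .
  qed
qed

lemma G_lip:
  fixes z w :: complex and q :: real assumes q: "q > 0"
  shows "norm (cnj z * of_real (norm z powr q) - cnj w * of_real (norm w powr q))
     \<le> (2 + q) * norm (z - w) * (norm z powr q + norm w powr q)"
proof -
  have eq: "cnj z * of_real (norm z powr q) - cnj w * of_real (norm w powr q)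
     = cnj (z - w) * of_real (norm z powr q) + cnj w * of_real (norm z powr q - norm w powr q)"
    by (simp add: algebra_simps)
  have T: "norm (cnj z * of_real (norm z powr q) - cnj w * of_real (norm w powr q))
      \<le> norm (z - w) * norm z powr q + norm w * \<bar>norm z powr q - norm w powr q\<bar>"
    unfolding eq by (rule order_trans[OF norm_triangle_ineq]) (simp only: norm_mult complex_mod_cnj norm_of_real, simp)
  have L: "norm w * \<bar>norm z powr q - norm w powr q\<bar> \<le> (1 + q) * \<bar>norm z - norm w\<bar> * (norm z powr q + norm w powr q)"
    by (rule pow_diff_lip) (use q in auto)
  have M: "(1 + q) * \<bar>norm z - norm w\<bar> * (norm z powr q + norm w powr q) \<le> (1 + q) * norm (z - w) * (norm z powr q + norm w powr q)"
    using q by (intro mult_right_mono mult_left_mono norm_triangle_ineq3) auto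
  have E: "(2+q) * norm (z - w) * (norm z powr q + norm w powr q) = norm (z - w) * norm z powr q
     + (1 + q) * norm (z - w) * (norm z powr q + norm w powr q) + norm (z - w) * norm w powr q"
    by (simp add: algebra_simps)
  have "0 \<le> norm (z - w) * norm w powr q" by simp
  then show ?thesis using T L M E by linarith
qed

lemma sbp: "(\<Sum>n<N. (u (Suc n) - c * u n) * G n)
   = (\<Sum>n<N. u (Suc n) * (G n - c * G (Suc n))) - c * u 0 * G 0 + c * u N * G N"
  for u G :: "nat \<Rightarrow> complex"
  by (induction N) (simp_all add: algebra_simps)

lemma shift_sum_le:
  fixes f :: "nat \<Rightarrow> real"
  assumes "\<And>n. f n \<ge> 0" "f N = 0"
  shows "(\<Sum>n<N. f (Suc n)) \<le> (\<Sum>n<N. f n)"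
proof -
  have "(\<Sum>n<Suc N. f n) = f 0 + (\<Sum>n<N. f (Suc n))" by (rule sum.lessThan_Suc_shift)
  moreover have "(\<Sum>n<Suc N. f n) = (\<Sum>n<N. f n)" using assms(2) by simp
  ultimately show ?thesis using assms(1)[of 0] by linarith
qed

lemma cnj_unit: "norm c = 1 \<Longrightarrow> c * cnj c = 1"
  using complex_norm_square[of c] by simp

lemma interior:
  fixes u :: "nat \<Rightarrow> complex" and c :: complex and N :: nat and p r1 r2 H :: real
  assumes c: "norm c = 1"
   and supp: "\<forall>n\<ge>N. u n = 0"
   and ub: "\<forall>n. norm (u n) \<le> H" and vb: "\<forall>n. norm (Dop c u n) \<le> H" and H: "H \<ge> 1"
   and p: "p > 2" and r: "r1 > 0" "r2 > 0" "1/r1 + 1/r2 = 2/p"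
  shows "(\<Sum>n<N. norm (Dop c u n) powr p) \<le> H * H powr (p - 1)
     + 2 * p * (\<Sum>n<N. norm (u n) powr r1) powr (1/r1) * (\<Sum>n<N. norm (Dop c (Dop c u) n) powr r2) powr (1/r2)
       * ((\<Sum>n<N. norm (Dop c u n) powr p) powr (1/p)) powr (p - 2)"
proof -
  define v where "v = Dop c u"
  define w where "w = Dop c v"
  define q where "q = p - 2"
  have q: "q > 0" "2 + q = p" "1 + q = p - 1" using p by (auto simp: q_def)
  define G where "G n = cnj (v n) * of_real (norm (v n) powr q)" for n
  define Y where "Y = (\<Sum>n<N. norm (v n) powr p)"
  have vsupp: "v n = 0" if "n \<ge> N" for n using supp that by (simp add: v_def Dop_def)
  have vG: "v n * G n = of_real (norm (v n) powr p)" for n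
  proof (cases "v n = 0")
    case True then show ?thesis using p by (simp add: G_def)
  next
    case False
    have "v n * G n = of_real ((norm (v n))^2 * norm (v n) powr q)"
      unfolding G_def mult.assoc[symmetric] complex_norm_square[symmetric] by simp
    also have "(norm (v n))^2 * norm (v n) powr q = norm (v n) powr p"
    proof -
      have "norm (v n) powr p = norm (v n) powr (2 + q)" using q(2) by simp
      also have "\<dots> = norm (v n) powr 2 * norm (v n) powr q" by (rule powr_add)
      also have "norm (v n) powr 2 = (norm (v n))^2" using False powr_realpow[of "norm (v n)" 2] by simp
      finally show ?thesis by simp
    qed
    finally show ?thesis .
  qed
  have "of_real Y = (\<Sum>n<N. v n * G n)" unfolding Y_def vG by simp
  also have "\<dots> = (\<Sum>n<N. (u (Suc n) - c * u n) * G n)" by (simp add: v_def Dop_def)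
  also have "\<dots> = (\<Sum>n<N. u (Suc n) * (G n - c * G (Suc n))) - c * u 0 * G 0"
    using sbp[of u c G N] supp by simp
  finally have Yeq: "of_real Y = (\<Sum>n<N. u (Suc n) * (G n - c * G (Suc n))) - c * u 0 * G 0" .
  have Gdiff: "norm (G n - c * G (Suc n)) \<le> p * norm (w n) * (norm (v n) powr q + norm (v (Suc n)) powr q)" for n
  proof -
    define z' where "z' = cnj c * v (Suc n)"
    have nz': "norm z' = norm (v (Suc n))" using c by (simp add: z'_def norm_mult)
    have cG: "c * G (Suc n) = cnj z' * of_real (norm z' powr q)"
      using c by (simp add: G_def z'_def norm_mult mult.assoc)
    have "c * (v n - z') = - w n"
      unfolding z'_def w_def Dop_def using cnj_unit[OF c] by (simp add: algebra_simps)
    then have "norm (v n - z') = norm (w n)" using c by (metis norm_minus_cancel norm_mult mult_1)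
    moreover have "norm (G n - c * G (Suc n)) \<le> (2 + q) * norm (v n - z') * (norm (v n) powr q + norm z' powr q)"
      unfolding cG unfolding G_def by (rule G_lip[OF q(1)])
    ultimately show ?thesis using nz' q by simp
  qed
  have G0: "norm (c * u 0 * G 0) \<le> H * H powr (p - 1)"
  proof -
    have "norm (G 0) = norm (v 0) * norm (v 0) powr q" by (simp add: G_def norm_mult)
    also have "\<dots> = norm (v 0) powr (p - 1)" using powr_mult_base[of "norm (v 0)" q] q by simp
    finally have "norm (G 0) = norm (v 0) powr (p - 1)" .
    then have "norm (c * u 0 * G 0) = norm (u 0) * norm (v 0) powr (p - 1)" using c by (simp add: norm_mult)
    also have "\<dots> \<le> H * H powr (p - 1)"
      using ub vb p H by (intro mult_mono powr_mono2) (auto simp: v_def)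
    finally show ?thesis .
  qed
  define a where "a n = norm (u (Suc n))" for n
  define b where "b n = norm (w n)" for n
  define S1 where "S1 = (\<Sum>n<N. a n * b n * norm (v n) powr q)"
  define S2 where "S2 = (\<Sum>n<N. a n * b n * norm (v (Suc n)) powr q)"
  have Y0: "Y \<ge> 0" unfolding Y_def by (intro sum_nonneg) auto
  have "Y = norm (of_real Y :: complex)" using Y0 by simp
  also have "\<dots> \<le> norm (\<Sum>n<N. u (Suc n) * (G n - c * G (Suc n))) + norm (c * u 0 * G 0)"
    unfolding Yeq by (rule norm_triangle_ineq4)
  also have "norm (\<Sum>n<N. u (Suc n) * (G n - c * G (Suc n))) \<le> (\<Sum>n<N. a n * (p * b n * (norm (v n) powr q + norm (v (Suc n)) powr q)))"
    by (rule order_trans[OF norm_sum], rule sum_mono) (auto simp: a_def b_def norm_mult intro!: mult_left_mono Gdiff)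
  also have "(\<Sum>n<N. a n * (p * b n * (norm (v n) powr q + norm (v (Suc n)) powr q))) = p * (S1 + S2)"
    by (simp add: S1_def S2_def sum_distrib_left sum.distrib algebra_simps)
  finally have Y1: "Y \<le> p * (S1 + S2) + H * H powr (p - 1)" using G0 by linarith
  define U where "U = (\<Sum>n<N. norm (u n) powr r1) powr (1/r1)"
  define W where "W = (\<Sum>n<N. norm (w n) powr r2) powr (1/r2)"
  define V where "V = (\<Sum>n<N. norm (v n) powr p) powr (1/p)"
  have w3: "1/r1 > 0" "1/r2 > 0" "q/p > 0" "1/r1 + 1/r2 + q/p = 1"
    using r q p by (auto simp: field_simps)
  have Ua: "(\<Sum>n<N. a n powr (1 / (1/r1))) powr (1/r1) \<le> U"
  proof -
    have e: "(\<Sum>n<N. a n powr (1 / (1/r1))) = (\<Sum>n<N. norm (u (Suc n)) powr r1)" by (simp add: a_def)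
    have "(\<Sum>n<N. norm (u (Suc n)) powr r1) \<le> (\<Sum>n<N. norm (u n) powr r1)"
      by (rule shift_sum_le[where f = "\<lambda>n. norm (u n) powr r1"]) (use supp in auto)
    then show ?thesis unfolding U_def e using r by (intro powr_mono2) (auto intro: sum_nonneg)
  qed
  have Wb: "(\<Sum>n<N. b n powr (1 / (1/r2))) powr (1/r2) = W" by (simp add: W_def b_def)
  have vq: "(norm (v m) powr q) powr (1 / (q/p)) = norm (v m) powr p" for m
    using q p by (simp add: powr_powr)
  have Vq: "(\<Sum>n<N. norm (v n) powr p) powr (q/p) = V powr q"
    unfolding V_def by (simp add: powr_powr)
  have S1b: "S1 \<le> U * W * V powr q"
  proof -
    have "S1 \<le> (\<Sum>n<N. a n powr (1 / (1/r1))) powr (1/r1) * (\<Sum>n<N. b n powr (1 / (1/r2))) powr (1/r2)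
       * (\<Sum>n<N. (norm (v n) powr q) powr (1 / (q/p))) powr (q/p)"
      unfolding S1_def by (rule holder3) (use w3 in \<open>auto simp: a_def b_def\<close>)
    also have "\<dots> \<le> U * W * V powr q"
      unfolding vq Vq Wb by (intro mult_right_mono Ua) (auto simp: W_def)
    finally show ?thesis .
  qed
  have S2b: "S2 \<le> U * W * V powr q"
  proof -
    have "S2 \<le> (\<Sum>n<N. a n powr (1 / (1/r1))) powr (1/r1) * (\<Sum>n<N. b n powr (1 / (1/r2))) powr (1/r2)
       * (\<Sum>n<N. (norm (v (Suc n)) powr q) powr (1 / (q/p))) powr (q/p)"
      unfolding S2_def by (rule holder3) (use w3 in \<open>auto simp: a_def b_def\<close>)
    also have "(\<Sum>n<N. (norm (v (Suc n)) powr q) powr (1 / (q/p))) powr (q/p) \<le> V powr q"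
    proof -
      have "(\<Sum>n<N. norm (v (Suc n)) powr p) \<le> (\<Sum>n<N. norm (v n) powr p)"
        by (rule shift_sum_le[where f = "\<lambda>n. norm (v n) powr p"]) (use vsupp p in auto)
      then show ?thesis unfolding vq Vq[symmetric] using q p by (intro powr_mono2) (auto intro: sum_nonneg)
    qed
    then have "(\<Sum>n<N. a n powr (1 / (1/r1))) powr (1/r1) * (\<Sum>n<N. b n powr (1 / (1/r2))) powr (1/r2)
       * (\<Sum>n<N. (norm (v (Suc n)) powr q) powr (1 / (q/p))) powr (q/p) \<le> U * W * V powr q"
      unfolding Wb by (intro mult_mono Ua) (auto simp: U_def W_def)
    finally show ?thesis .
  qed
  have "Y \<le> H * H powr (p - 1) + 2 * p * U * W * V powr q"
  proof -
    have "p * (S1 + S2) \<le> p * (2 * (U * W * V powr q))" using S1b S2b p by (intro mult_left_mono) auto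
    then show ?thesis using Y1 by (simp add: algebra_simps)
  qed
  then show ?thesis by (simp add: Y_def U_def W_def V_def q_def v_def w_def)
qed

lemma max_principle:
  fixes R :: "nat \<Rightarrow> real"
  assumes pos: "\<And>j. j \<le> d \<Longrightarrow> R j > 0"
    and cv: "\<And>j. 0 < j \<Longrightarrow> j < d \<Longrightarrow> (R j)^2 \<le> R (j-1) * R (j+1)"
    and j: "j \<le> d"
  shows "R j \<le> max (R 0) (R d)"
proof -
  define M where "M = Max (R ` {..d})"
  have RM: "R i \<le> M" if "i \<le> d" for i unfolding M_def using that by (intro Max_ge) auto
  have "M \<in> R ` {..d}" unfolding M_def by (intro Max_in) auto
  then obtain i0 where i0: "i0 \<le> d" "R i0 = M" by auto
  define J where "J = {i. i \<le> d \<and> R i = M}"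
  have finJ: "finite J" unfolding J_def by auto
  have J0: "i0 \<in> J" using i0 by (simp add: J_def)
  define js where "js = Max J"
  have js: "js \<in> J" unfolding js_def using finJ J0 by (intro Max_in) auto
  have jsmax: "i \<le> js" if "i \<in> J" for i unfolding js_def using finJ that by simp
  have jsd: "js \<le> d" "R js = M" using js by (auto simp: J_def)
  have "js = 0 \<or> js = d"
  proof (rule ccontr)
    assume "\<not> (js = 0 \<or> js = d)"
    then have jj: "0 < js" "js < d" using jsd by auto
    have "js + 1 \<notin> J" using jsmax by fastforce
    then have lt: "R (js + 1) < M" using RM[of "js+1"] jj by (auto simp: J_def)
    have le: "R (js - 1) \<le> M" using RM[of "js - 1"] jj by simp
    have Mpos: "M > 0" using pos[of js] jsd by simp
    have "M^2 \<le> R (js - 1) * R (js + 1)" using cv[OF jj] jsd by simp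
    also have "\<dots> \<le> M * R (js + 1)" using le pos[of "js+1"] jj by (intro mult_right_mono) auto
    also have "\<dots> < M * M" using lt Mpos by simp
    finally show False by (simp add: power2_eq_square)
  qed
  then have "M \<le> max (R 0) (R d)" using jsd by auto
  then show ?thesis using RM[OF j] by linarith
qed

lemma powr_le_1plus:
  fixes y e :: real assumes "y \<ge> 0" "0 < e" "e \<le> 1"
  shows "y powr e \<le> 1 + y"
proof (cases "y \<le> 1")
  case True
  then have "y powr e \<le> 1 powr e" using assms by (intro powr_mono2) auto
  then show ?thesis using assms by simp
next
  case False
  then have "y powr e \<le> y powr 1" using assms by (intro powr_mono) auto
  then show ?thesis using assms by simp
qed

lemma Dop_supp: "\<forall>n\<ge>N. u n = 0 \<Longrightarrow> \<forall>n\<ge>N. (Dop c ^^ j) u n = 0"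
  by (induction j) (auto simp: Dop_def)

lemma Dop_bound:
  assumes "norm c = 1" "\<forall>n. norm (u n) \<le> 1"
  shows "norm ((Dop c ^^ j) u n) \<le> 2^j"
proof (induction j arbitrary: n)
  case 0 then show ?case using assms by simp
next
  case (Suc j)
  have "norm ((Dop c ^^ Suc j) u n) = norm ((Dop c ^^ j) u (Suc n) - c * (Dop c ^^ j) u n)"
    by (simp add: Dop_def)
  also have "\<dots> \<le> norm ((Dop c ^^ j) u (Suc n)) + norm (c * (Dop c ^^ j) u n)" by (rule norm_triangle_ineq4)
  also have "\<dots> \<le> 2^j + 2^j" using Suc.IH[of "Suc n"] Suc.IH[of n] assms(1) by (simp add: norm_mult)
  finally show ?case by simp
qed

definition Kc :: "nat \<Rightarrow> real" where
  "Kc d = 2^d * (2^d) powr (real (2*d+2)) + 2 * real (2*d+2)"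

lemma Kc_ge1: "Kc d \<ge> 1"
proof -
  have "(1::real) \<le> 2^d" by simp
  moreover have "(1::real) \<le> (2^d) powr (real (2*d+2))" by (rule ge_one_powr_ge_zero) auto
  ultimately have "1 * 1 \<le> (2::real)^d * (2^d) powr (real (2*d+2))"
    by (intro mult_mono) auto
  then show ?thesis unfolding Kc_def by simp
qed

lemma GN_finite:
  fixes c :: complex and u :: "nat \<Rightarrow> complex" and d N j :: nat and A :: real
  assumes c: "norm c = 1" and d: "d \<ge> 1" and ub: "\<forall>n. norm (u n) \<le> 1" and supp: "\<forall>n\<ge>N. u n = 0"
    and A: "A \<ge> 0"
    and Y0: "(\<Sum>n<N. norm (u n) powr (real (2*d+2))) \<le> A"
    and Yd: "(\<Sum>n<N. norm ((Dop c ^^ d) u n) powr 2) \<le> A"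
    and j: "j \<le> d"
  shows "(\<Sum>n<N. norm ((Dop c ^^ j) u n) powr (real (2*d+2) / real (j+1)))
          \<le> ((1+A)^2 * Kc d ^ (d*d)) powr (real (2*d+2))"
proof -
  define m where "m = real (2*d+2)"
  define p where "p i = m / real (i+1)" for i
  define h where "h i = (Dop c ^^ i) u" for i
  define Y where "Y i = (\<Sum>n<N. norm (h i n) powr p i)" for i
  define Nr where "Nr i = Y i powr (1 / p i)" for i
  define P where "P i = max 1 (Nr i)" for i
  define K where "K = Kc d"
  define H :: real where "H = 2^d"
  define R where "R i = (P i)^2 * K^(i*i)" for i
  have K1: "K \<ge> 1" unfolding K_def by (rule Kc_ge1)
  have H1: "H \<ge> 1" unfolding H_def by simp
  have m2: "m \<ge> 4" unfolding m_def using d by simp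
  have ppos: "p i > 0" for i unfolding p_def using m2 by simp
  have pm: "p i \<le> m" for i unfolding p_def using m2 by (simp add: field_simps)
  have p0: "p 0 = m" unfolding p_def by simp
  have pd: "p d = 2" unfolding p_def m_def by (simp add: field_simps)
  have hsupp: "\<forall>n\<ge>N. h i n = 0" for i unfolding h_def by (rule Dop_supp[OF supp])
  have hb: "norm (h i n) \<le> H" if "i \<le> d" for i n
  proof -
    have "norm (h i n) \<le> 2^i" unfolding h_def by (rule Dop_bound[OF c ub])
    also have "(2::real)^i \<le> 2^d" using that by (intro power_increasing) auto
    finally show ?thesis by (simp add: H_def)
  qed
  have hSuc: "h (Suc i) = Dop c (h i)" for i by (simp add: h_def)
  have Y0': "Y i \<ge> 0" for i unfolding Y_def by (intro sum_nonneg) auto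
  have Nr0: "Nr i \<ge> 0" for i unfolding Nr_def by simp
  have NrY: "Nr i powr p i = Y i" for i
    unfolding Nr_def using ppos[of i] Y0'[of i] by (simp add: powr_powr)
  have P1: "P i \<ge> 1" for i unfolding P_def by simp
  have inter: "Y i \<le> H * H powr m + 2 * m * Nr (i-1) * Nr (i+1) * Nr i powr (p i - 2)"
    if i: "1 \<le> i" "i < d" for i
  proof -
    have pi2: "p i > 2" unfolding p_def m_def using i by (simp add: field_simps)
    have inv: "1 / p k = real (k+1) / m" for k unfolding p_def by simp
    have r: "1 / p (i-1) + 1 / p (i+1) = 2 / p i"
    proof -
      have "2 / p i = 2 * (1 / p i)" by simp
      then show ?thesis unfolding inv using i m2 by (simp add: field_simps)
    qed
    have hi: "h i = Dop c (h (i-1))" using hSuc[of "i-1"] i by simp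
    have hi1: "h (i+1) = Dop c (Dop c (h (i-1)))" using hSuc[of i] hi by simp
    have "Y i \<le> H * H powr (p i - 1) + 2 * p i * (\<Sum>n<N. norm (h (i-1) n) powr p (i-1)) powr (1/p (i-1))
       * (\<Sum>n<N. norm (Dop c (Dop c (h (i-1))) n) powr p (i+1)) powr (1/p (i+1))
       * ((\<Sum>n<N. norm (Dop c (h (i-1)) n) powr p i) powr (1/p i)) powr (p i - 2)"
      unfolding Y_def hi
    proof (rule interior[OF c hsupp _ _ H1 pi2 ppos ppos r])
      show "\<forall>n. norm (h (i-1) n) \<le> H" using hb i by simp
      have hiS: "Dop c (h (i-1)) = h i" by (rule hi[symmetric])
      show "\<forall>n. norm (Dop c (h (i-1)) n) \<le> H" unfolding hiS using hb i by simp
    qed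
    also have "\<dots> = H * H powr (p i - 1) + 2 * p i * Nr (i-1) * Nr (i+1) * Nr i powr (p i - 2)"
      unfolding Nr_def Y_def hi[symmetric] by (simp add: hSuc)
    also have "\<dots> \<le> H * H powr m + 2 * m * Nr (i-1) * Nr (i+1) * Nr i powr (p i - 2)"
    proof -
      have "H powr (p i - 1) \<le> H powr m" using H1 pm[of i] by (intro powr_mono) auto
      then have "H * H powr (p i - 1) \<le> H * H powr m" using H1 by simp
      moreover have "2 * p i * (Nr (i-1) * Nr (i+1) * Nr i powr (p i - 2)) \<le> 2 * m * (Nr (i-1) * Nr (i+1) * Nr i powr (p i - 2))"
        using pm[of i] Nr0 by (intro mult_right_mono) auto
      ultimately show ?thesis by (simp add: mult.assoc)
    qed
    finally show ?thesis .
  qed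
  have KHm: "K = H * H powr m + 2 * m" unfolding K_def Kc_def H_def m_def by simp
  have Pineq: "(P i)^2 \<le> K * P (i-1) * P (i+1)" if i: "1 \<le> i" "i < d" for i
  proof (cases "Nr i \<le> 1")
    case True
    then have "P i = 1" unfolding P_def by simp
    moreover have "1 \<le> K * P (i-1) * P (i+1)"
    proof -
      have "1 * 1 \<le> P (i-1) * P (i+1)" using P1[of "i-1"] P1[of "i+1"] by (intro mult_mono) auto
      then have "1 * 1 \<le> K * (P (i-1) * P (i+1))" using K1 by (intro mult_mono) auto
      then show ?thesis by (simp add: mult.assoc)
    qed
    ultimately show ?thesis by simp
  next
    case False
    then have Pi: "P i = Nr i" unfolding P_def by simp
    have pi2: "p i > 2" unfolding p_def m_def using i by (simp add: field_simps)
    define t where "t = Nr i powr (p i - 2)"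
    have t1: "t \<ge> 1" unfolding t_def using False pi2 by (intro ge_one_powr_ge_zero) auto
    have "Nr i powr p i = Nr i powr (2 + (p i - 2))" by simp
    also have "\<dots> = Nr i powr 2 * t" unfolding t_def by (rule powr_add)
    also have "Nr i powr 2 = (Nr i)^2" using False powr_realpow[of "Nr i" 2] by simp
    finally have e: "(Nr i)^2 * t = Y i" using NrY[of i] by simp
    have NN: "Nr (i-1) * Nr (i+1) \<le> P (i-1) * P (i+1)"
      unfolding P_def using Nr0 by (intro mult_mono) auto
    have "(Nr i)^2 * t \<le> H * H powr m + 2 * m * Nr (i-1) * Nr (i+1) * t"
      using inter[OF i] e unfolding t_def by simp
    also have "\<dots> \<le> (H * H powr m + 2 * m * Nr (i-1) * Nr (i+1)) * t"
    proof -
      have "H * H powr m \<le> H * H powr m * t" using t1 H1 by simp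
      moreover have "(H * H powr m + 2 * m * Nr (i-1) * Nr (i+1)) * t = H * H powr m * t + 2 * m * Nr (i-1) * Nr (i+1) * t"
        by (rule distrib_right)
      ultimately show ?thesis by linarith
    qed
    finally have "(Nr i)^2 \<le> H * H powr m + 2 * m * Nr (i-1) * Nr (i+1)" using t1 by simp
    also have "\<dots> \<le> H * H powr m * (P (i-1) * P (i+1)) + 2 * m * (P (i-1) * P (i+1))"
    proof -
      have "1 * 1 \<le> P (i-1) * P (i+1)" using P1[of "i-1"] P1[of "i+1"] by (intro mult_mono) auto
      then have "H * H powr m \<le> H * H powr m * (P (i-1) * P (i+1))" using H1 by simp
      moreover have "2 * m * (Nr (i-1) * Nr (i+1)) \<le> 2 * m * (P (i-1) * P (i+1))"
        using NN m2 by (intro mult_left_mono) auto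
      ultimately show ?thesis by (simp add: mult.assoc)
    qed
    also have "\<dots> = K * P (i-1) * P (i+1)" unfolding KHm by (simp add: algebra_simps)
    finally show ?thesis using Pi by simp
  qed
  have Rpos: "R i > 0" for i unfolding R_def using P1[of i] K1 by simp
  have Rcv: "(R i)^2 \<le> R (i-1) * R (i+1)" if i: "0 < i" "i < d" for i
  proof -
    have ii: "(i-1)*(i-1) + (i+1)*(i+1) = 2 + 2*(i*i)" using i
      by (cases i) (auto simp: algebra_simps)
    have e1: "(K^(i*i))^2 = K^(2*(i*i))" by (simp only: power_mult[symmetric] mult.commute)
    have e2: "K^((i-1)*(i-1)) * K^((i+1)*(i+1)) = K^2 * K^(2*(i*i))"
      by (simp only: power_add[symmetric] ii)
    have "(R i)^2 = ((P i)^2)^2 * (K^(i*i))^2" unfolding R_def by (simp only: power_mult_distrib)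
    also have "\<dots> \<le> (K * P (i-1) * P (i+1))^2 * (K^(i*i))^2"
      using Pineq[of i] i P1[of i] by (intro mult_right_mono power_mono) auto
    also have "\<dots> = (P (i-1))^2 * (P (i+1))^2 * (K^2 * K^(2*(i*i)))"
      by (simp only: e1 power_mult_distrib mult_ac)
    also have "\<dots> = R (i-1) * R (i+1)"
      unfolding R_def e2[symmetric] by (simp only: mult_ac)
    finally show ?thesis .
  qed
  have Rj: "R j \<le> max (R 0) (R d)"
    by (rule max_principle[OF _ Rcv j]) (use Rpos in auto)
  have Pe: "P i \<le> 1 + A" if "i = 0 \<or> i = d" for i
  proof -
    have "Y i \<le> A" using that Y0 Yd p0 pd unfolding Y_def h_def m_def by auto
    moreover have "Nr i \<le> 1 + Y i" unfolding Nr_def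
      by (rule powr_le_1plus) (use Y0' ppos that p0 pd m2 in auto)
    ultimately show ?thesis unfolding P_def using A by auto
  qed
  have "R 0 \<le> (1+A)^2 * K^(d*d)"
  proof -
    have "R 0 = (P 0)^2" unfolding R_def by simp
    also have "\<dots> \<le> (1+A)^2" using Pe[of 0] P1[of 0] by (intro power_mono) auto
    also have "\<dots> \<le> (1+A)^2 * K^(d*d)"
    proof -
      have "1 \<le> K^(d*d)" using K1 by (rule one_le_power)
      then show ?thesis using mult_left_mono[of 1 "K^(d*d)" "(1+A)^2"] by simp
    qed
    finally show ?thesis .
  qed
  moreover have "R d \<le> (1+A)^2 * K^(d*d)"
    unfolding R_def using Pe[of d] P1[of d] K1 by (intro mult_right_mono power_mono) auto
  ultimately have RB: "R j \<le> (1+A)^2 * K^(d*d)" using Rj by linarith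
  have "Nr j \<le> P j" unfolding P_def by simp
  also have "P j \<le> (P j)^2" using P1[of j] by (simp add: power2_eq_square)
  also have "(P j)^2 \<le> R j"
  proof -
    have "1 \<le> K^(j*j)" using K1 by (rule one_le_power)
    then show ?thesis unfolding R_def using mult_left_mono[of 1 "K^(j*j)" "(P j)^2"] by simp
  qed
  finally have NB: "Nr j \<le> (1+A)^2 * K^(d*d)" using RB by linarith
  have B1: "(1+A)^2 * K^(d*d) \<ge> 1 * 1" using A K1 by (intro mult_mono one_le_power) auto
  have "Y j = Nr j powr p j" using NrY by simp
  also have "\<dots> \<le> ((1+A)^2 * K^(d*d)) powr p j" using NB Nr0 ppos by (intro powr_mono2) (auto simp: less_imp_le)
  also have "\<dots> \<le> ((1+A)^2 * K^(d*d)) powr m" using B1 pm by (intro powr_mono) auto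
  finally show ?thesis unfolding Y_def h_def p_def m_def K_def by simp
qed

lemma Dop_agree:
  "(\<And>i. i \<le> j \<Longrightarrow> u (n+i) = v (n+i)) \<Longrightarrow> (Dop c ^^ j) u n = (Dop c ^^ j) v n"
proof (induction j arbitrary: u v)
  case 0 then show ?case using "0.prems"[of 0] by simp
next
  case (Suc j)
  have "(Dop c ^^ j) (Dop c u) n = (Dop c ^^ j) (Dop c v) n"
  proof (rule Suc.IH)
    fix i assume "i \<le> j"
    then show "Dop c u (n+i) = Dop c v (n+i)"
      using Suc.prems[of i] Suc.prems[of "Suc i"] by (simp add: Dop_def)
  qed
  then show ?case by (simp only: Dop_pow_Suc')
qed

lemma pow2_powr: "(x::real) \<ge> 0 \<Longrightarrow> x powr 2 = x^2"
  using powr_realpow'[of x 2] by simp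

lemma normpow_powr: "n \<noteq> 0 \<Longrightarrow> norm (z::complex) ^ n = norm z powr real n"
  using powr_realpow'[of "norm z" n] by simp

lemma l2_Dop:
  assumes "summable (\<lambda>n. norm (u n) powr 2)"
  shows "summable (\<lambda>n. norm (Dop c u n) powr 2)"
proof -
  have s: "summable (\<lambda>n. (norm (u n))^2)" using assms by (simp add: pow2_powr)
  then have s1: "summable (\<lambda>n. (norm (u (Suc n)))^2)" by (subst summable_Suc_iff)
  have S: "summable (\<lambda>n. 2 * (norm (u (Suc n)))^2 + 2 * (norm c)^2 * (norm (u n))^2)"
    by (intro summable_add summable_mult s s1)
  have B: "norm (norm (Dop c u n) powr 2) \<le> 2 * (norm (u (Suc n)))^2 + 2 * (norm c)^2 * (norm (u n))^2" for n
  proof -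
    have "norm (Dop c u n) \<le> norm (u (Suc n)) + norm c * norm (u n)"
      unfolding Dop_def using norm_triangle_ineq4[of "u (Suc n)" "c * u n"] by (simp add: norm_mult)
    then have "(norm (Dop c u n))^2 \<le> (norm (u (Suc n)) + norm c * norm (u n))^2"
      by (intro power_mono) auto
    also have "\<dots> \<le> 2 * (norm (u (Suc n)))^2 + 2 * (norm c)^2 * (norm (u n))^2"
    proof -
      have "\<And>x y :: real. (x + y)^2 \<le> 2 * x^2 + 2 * y^2"
        by (simp add: power2_sum) (smt (verit) sum_squares_bound)
      from this[of "norm (u (Suc n))" "norm c * norm (u n)"] show ?thesis by (simp add: power_mult_distrib)
    qed
    finally show ?thesis by (simp add: pow2_powr)
  qed
  show ?thesis by (rule summable_comparison_test'[OF S, where N=0]) (use B in auto)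
qed

lemma GN:
  fixes c :: complex and \<alpha> :: "nat \<Rightarrow> complex" and d j :: nat
  assumes c: "norm c = 1" and d: "d \<ge> 1" and ub: "\<forall>n. norm (\<alpha> n) \<le> 1"
    and s0: "summable (\<lambda>n. norm (\<alpha> n) powr real (2*d+2))"
    and sd: "summable (\<lambda>n. norm ((Dop c ^^ d) \<alpha> n) powr 2)"
    and j: "j \<le> d"
  shows "summable (\<lambda>n. norm ((Dop c ^^ j) \<alpha> n) powr (real (2*d+2) / real (j+1)))"
proof -
  define A where "A = suminf (\<lambda>n. norm (\<alpha> n) powr real (2*d+2)) + suminf (\<lambda>n. norm ((Dop c ^^ d) \<alpha> n) powr 2) + real d * 4^d"
  define Bnd where "Bnd = ((1+A)^2 * Kc d ^ (d*d)) powr (real (2*d+2))"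
  have S0: "0 \<le> suminf (\<lambda>n. norm (\<alpha> n) powr real (2*d+2))" using s0 by (intro suminf_nonneg) auto
  have Sd: "0 \<le> suminf (\<lambda>n. norm ((Dop c ^^ d) \<alpha> n) powr 2)" using sd by (intro suminf_nonneg) auto
  have A0: "A \<ge> 0" unfolding A_def using S0 Sd by simp
  have bnd: "(\<Sum>n<N. norm ((Dop c ^^ j) \<alpha> n) powr (real (2*d+2) / real (j+1))) \<le> Bnd" for N
  proof -
    define M where "M = N + j + 1"
    define \<beta> where "\<beta> n = (if n < M then \<alpha> n else 0)" for n
    have bub: "\<forall>n. norm (\<beta> n) \<le> 1" using ub by (simp add: \<beta>_def)
    have bsupp: "\<forall>n\<ge>M. \<beta> n = 0" by (simp add: \<beta>_def)
    have Y0: "(\<Sum>n<M. norm (\<beta> n) powr (real (2*d+2))) \<le> A"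
    proof -
      have "(\<Sum>n<M. norm (\<beta> n) powr (real (2*d+2))) = (\<Sum>n<M. norm (\<alpha> n) powr (real (2*d+2)))"
        by (intro sum.cong) (auto simp: \<beta>_def)
      also have "\<dots> \<le> suminf (\<lambda>n. norm (\<alpha> n) powr real (2*d+2))"
        by (rule sum_le_suminf[OF s0]) auto
      moreover have "0 \<le> real d * 4^d" by simp
      ultimately show ?thesis unfolding A_def using Sd by linarith
    qed
    have Yd: "(\<Sum>n<M. norm ((Dop c ^^ d) \<beta> n) powr 2) \<le> A"
    proof -
      define g where "g n = (if M \<le> n + d then (4::real)^d else 0)" for n
      have pt: "norm ((Dop c ^^ d) \<beta> n) powr 2 \<le> norm ((Dop c ^^ d) \<alpha> n) powr 2 + g n" for n
      proof (cases "n + d < M")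
        case True
        then have "(Dop c ^^ d) \<beta> n = (Dop c ^^ d) \<alpha> n"
          by (intro Dop_agree) (auto simp: \<beta>_def)
        then show ?thesis by (simp add: g_def)
      next
        case False
        have "norm ((Dop c ^^ d) \<beta> n) \<le> 2^d" by (rule Dop_bound[OF c bub])
        then have "norm ((Dop c ^^ d) \<beta> n) powr 2 \<le> (2^d) powr 2" by (intro powr_mono2) auto
        also have "((2::real)^d) powr 2 = 4^d"
        proof -
          have "((2::real)^d) powr 2 = (2^d)^2" by (simp add: pow2_powr)
          also have "\<dots> = (2^2)^d" by (simp only: power_mult[symmetric] mult.commute)
          also have "\<dots> = 4^d" by simp
          finally show ?thesis .
        qed
        finally have "norm ((Dop c ^^ d) \<beta> n) powr 2 \<le> 4^d" .
        moreover have "0 \<le> norm ((Dop c ^^ d) \<alpha> n) powr 2" by simp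
        moreover have "g n = 4^d" using False by (simp add: g_def)
        ultimately show ?thesis by linarith
      qed
      have "(\<Sum>n<M. norm ((Dop c ^^ d) \<beta> n) powr 2) \<le> (\<Sum>n<M. norm ((Dop c ^^ d) \<alpha> n) powr 2) + (\<Sum>n<M. g n)"
        unfolding sum.distrib[symmetric] by (rule sum_mono) (rule pt)
      also have "(\<Sum>n<M. norm ((Dop c ^^ d) \<alpha> n) powr 2) \<le> suminf (\<lambda>n. norm ((Dop c ^^ d) \<alpha> n) powr 2)"
        by (rule sum_le_suminf[OF sd]) auto
      also have "(\<Sum>n<M. g n) \<le> real d * 4^d"
      proof -
        have "(\<Sum>n<M. g n) = (\<Sum>n\<in>{M-d..<M}. g n)"
          by (rule sum.mono_neutral_right) (auto simp: g_def)
        also have "\<dots> \<le> (\<Sum>n\<in>{M-d..<M}. (4::real)^d)" by (rule sum_mono) (simp add: g_def)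
        also have "\<dots> = real (M - (M - d)) * 4^d" by simp
        also have "\<dots> \<le> real d * 4^d" by (intro mult_right_mono) auto
        finally show ?thesis .
      qed
      finally show ?thesis unfolding A_def using S0 by linarith
    qed
    have G: "(\<Sum>n<M. norm ((Dop c ^^ j) \<beta> n) powr (real (2*d+2) / real (j+1))) \<le> Bnd"
      unfolding Bnd_def by (rule GN_finite[OF c d bub bsupp A0 Y0 Yd j])
    have "(\<Sum>n<N. norm ((Dop c ^^ j) \<alpha> n) powr (real (2*d+2) / real (j+1)))
        = (\<Sum>n<N. norm ((Dop c ^^ j) \<beta> n) powr (real (2*d+2) / real (j+1)))"
    proof (intro sum.cong refl)
      fix n assume "n \<in> {..<N}"
      then have "(Dop c ^^ j) \<alpha> n = (Dop c ^^ j) \<beta> n"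
        by (intro Dop_agree) (auto simp: \<beta>_def M_def)
      then show "norm ((Dop c ^^ j) \<alpha> n) powr (real (2*d+2) / real (j+1)) = norm ((Dop c ^^ j) \<beta> n) powr (real (2*d+2) / real (j+1))"
        by simp
    qed
    also have "\<dots> \<le> (\<Sum>n<M. norm ((Dop c ^^ j) \<beta> n) powr (real (2*d+2) / real (j+1)))"
      by (rule sum_mono2) (auto simp: M_def)
    finally show ?thesis using G by linarith
  qed
  show ?thesis by (rule summableI_nonneg_bounded[OF _ bnd]) auto
qed

lemma term_summable:
  fixes \<alpha> :: "nat \<Rightarrow> complex" and c :: complex and d k :: nat and bs gs :: "nat list"
  assumes k: "k \<ge> 1"
    and sj: "\<And>j. summable (\<lambda>n. norm ((Dop c ^^ j) \<alpha> n) powr (real (2*d+2) / real (min j d + 1)))"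
    and W: "(\<Sum>p<k. real (min (bs!p) d + 1) + real (min (gs!p) d + 1)) \<ge> real (2*d+2)"
  shows "summable (\<lambda>n. norm (\<Prod>p<k. (Dop c ^^ (bs!p)) \<alpha> n * cnj ((Dop c ^^ (gs!p)) \<alpha> n)))"
proof -
  define m where "m = real (2*d+2)"
  have m0: "m > 0" unfolding m_def by simp
  define e where "e j = real (min j d + 1)" for j
  have e0: "e j > 0" for j unfolding e_def by simp
  define a where "a j n = norm ((Dop c ^^ j) \<alpha> n) powr (m / e j)" for j n
  define Mn where "Mn n = (\<Sum>p<k. a (bs!p) n + a (gs!p) n)" for n
  have aS: "summable (a j)" for j using sj[of j] unfolding a_def m_def e_def by simp
  have MS: "summable Mn" unfolding Mn_def by (intro summable_sum summable_add aS)
  have a0: "a j n \<ge> 0" for j n unfolding a_def by simp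
  have M0: "Mn n \<ge> 0" for n unfolding Mn_def using a0 by (intro sum_nonneg add_nonneg_nonneg) auto
  obtain Bd where Bd: "Bd \<ge> 1" "\<And>n. Mn n \<le> Bd"
  proof -
    have "convergent Mn" using summable_LIMSEQ_zero[OF MS] by (auto simp: convergent_def)
    then have "Bseq Mn" by (rule convergent_imp_Bseq)
    then obtain K where K: "\<And>n. norm (Mn n) \<le> K" by (auto simp: Bseq_def)
    show ?thesis
    proof (rule that[of "max 1 K"])
      show "1 \<le> max 1 K" by simp
      fix n show "Mn n \<le> max 1 K" using K[of n] M0[of n] by simp
    qed
  qed
  have bk: "norm ((Dop c ^^ j) \<alpha> n) = a j n powr (e j / m)" for j n
    unfolding a_def using m0 e0[of j] by (simp add: powr_powr)
  have ale: "a (bs!p) n \<le> Mn n \<and> a (gs!p) n \<le> Mn n" if p: "p < k" for p n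
  proof -
    have "a (bs!p) n + a (gs!p) n \<le> Mn n" unfolding Mn_def
      by (rule member_le_sum[where f = "\<lambda>p. a (bs!p) n + a (gs!p) n"]) (use p a0 in \<open>auto intro: add_nonneg_nonneg\<close>)
    then show ?thesis using a0[of "bs!p" n] a0[of "gs!p" n] by linarith
  qed
  have fb: "norm ((Dop c ^^ j) \<alpha> n) \<le> Mn n powr (e j / m)" if "a j n \<le> Mn n" for j n
    unfolding bk using that a0 m0 e0[of j] by (intro powr_mono2) (auto simp: less_imp_le)
  define Wt where "Wt = (\<Sum>p<k. e (bs!p) / m + e (gs!p) / m)"
  have Wt1: "Wt \<ge> 1"
  proof -
    have "Wt = (\<Sum>p<k. e (bs!p) + e (gs!p)) / m"
      unfolding Wt_def by (simp add: sum_divide_distrib add_divide_distrib)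
    moreover have "(\<Sum>p<k. e (bs!p) + e (gs!p)) \<ge> m" using W unfolding e_def m_def by simp
    ultimately show ?thesis using m0 by simp
  qed
  have pt: "norm (norm (\<Prod>p<k. (Dop c ^^ (bs!p)) \<alpha> n * cnj ((Dop c ^^ (gs!p)) \<alpha> n))) \<le> Bd powr (Wt - 1) * Mn n" for n
  proof -
    have "norm (norm (\<Prod>p<k. (Dop c ^^ (bs!p)) \<alpha> n * cnj ((Dop c ^^ (gs!p)) \<alpha> n)))
        = (\<Prod>p<k. norm ((Dop c ^^ (bs!p)) \<alpha> n) * norm ((Dop c ^^ (gs!p)) \<alpha> n))"
      by (simp add: prod_norm[symmetric] norm_mult abs_of_nonneg prod_nonneg)
    also have "\<dots> \<le> (\<Prod>p<k. Mn n powr (e (bs!p) / m) * Mn n powr (e (gs!p) / m))"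
      by (intro prod_mono conjI mult_mono fb) (use ale in auto)
    also have "\<dots> \<le> Bd powr (Wt - 1) * Mn n"
    proof (cases "Mn n = 0")
      case True
      have z: "(\<Prod>p<k. Mn n powr (e (bs!p) / m) * Mn n powr (e (gs!p) / m)) = 0"
        using True k by (intro prod_zero bexI[of _ 0]) auto
      show ?thesis unfolding z using True by simp
    next
      case False
      then have Mp: "Mn n > 0" using M0[of n] by simp
      have "(\<Prod>p<k. Mn n powr (e (bs!p) / m) * Mn n powr (e (gs!p) / m)) = (\<Prod>p<k. Mn n powr (e (bs!p) / m + e (gs!p) / m))"
        by (simp add: powr_add)
      also have "\<dots> = Mn n powr Wt" unfolding Wt_def using Mp by (simp add: powr_sum)
      also have "\<dots> = Mn n powr (1 + (Wt - 1))" by simp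
      also have "\<dots> = Mn n * Mn n powr (Wt - 1)" using Mp by (subst powr_add) simp
      also have "\<dots> \<le> Mn n * Bd powr (Wt - 1)"
        using Mp Bd(2)[of n] Wt1 by (intro mult_left_mono powr_mono2) auto
      finally show ?thesis by (simp add: mult.commute)
    qed
    finally show ?thesis .
  qed
  show ?thesis
    by (rule summable_comparison_test'[where N=0 and g = "\<lambda>n. Bd powr (Wt - 1) * Mn n"])
       (use summable_mult[OF MS] pt in auto)
qed

lemma l2_Dop_pow:
  assumes "summable (\<lambda>n. norm (v n) powr 2)"
  shows "summable (\<lambda>n. norm ((Dop c ^^ i) v n) powr 2)"
proof (induction i)
  case 0 show ?case using assms by simp
next
  case (Suc i) show ?case unfolding funpow.simps comp_def by (rule l2_Dop[OF Suc.IH])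
qed

theorem lemma15:
  fixes \<theta>1 :: real and d k :: nat and \<alpha> :: "nat \<Rightarrow> complex"
    and C :: "nat list \<times> nat list \<Rightarrow> complex"
  assumes "0 \<le> \<theta>1" "\<theta>1 < 2 * pi" "d \<ge> 1" "k \<ge> 1"
    and "\<forall>n. norm (\<alpha> n) < 1"
    and "in_lp 2 (shift_minus_pow (exp (- \<i> * \<theta>1)) d \<alpha>)"
    and "in_lp (2 * d + 2) \<alpha>"
    and "is_poly2k k C" and "poly_supp C \<noteq> {}"
    and "int (L2k \<theta>1 d k C) \<ge> 2 * (int d + 1) - 2 * int k"
  shows "\<exists>B. \<forall>N. norm (\<Sum>n\<le>N. phi2k k \<alpha> C n) \<le> B"
proof -
  note d = assms(3) and k = assms(4) and poly = assms(8) and Lc = assms(10)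
  define c where "c = exp (- \<i> * complex_of_real \<theta>1)"
  have c1: "norm c = 1" unfolding c_def by (simp add: norm_exp_eq_Re)
  have ub: "\<forall>n. norm (\<alpha> n) \<le> 1" using assms(5) by (simp add: less_imp_le)
  have s0: "summable (\<lambda>n. norm (\<alpha> n) powr real (2*d+2))"
  proof -
    have "(\<lambda>n. norm (\<alpha> n) ^ (2*d+2)) = (\<lambda>n. norm (\<alpha> n) powr real (2*d+2))"
      by (rule ext, rule normpow_powr) simp
    then show ?thesis using assms(7) unfolding in_lp_def by simp
  qed
  have sd: "summable (\<lambda>n. norm ((Dop c ^^ d) \<alpha> n) powr 2)"
    using assms(6) unfolding in_lp_def smp_eq c_def by (simp add: pow2_powr)
  have sj: "summable (\<lambda>n. norm ((Dop c ^^ j) \<alpha> n) powr (real (2*d+2) / real (min j d + 1)))" for j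
  proof (cases "j \<le> d")
    case True
    then show ?thesis using GN[OF c1 d ub s0 sd True] by simp
  next
    case False
    have e: "real (2*d+2) / real (min j d + 1) = 2" using False by (simp add: field_simps)
    have "(Dop c ^^ j) \<alpha> = (Dop c ^^ (j - d)) ((Dop c ^^ d) \<alpha>)"
      using False funpow_add[of "j - d" d "Dop c"] by simp
    then show ?thesis unfolding e using l2_Dop_pow[OF sd, of "j - d"] by simp
  qed
  have fin: "finite (poly_supp C)" using poly unfolding is_poly2k_def by simp
  define M where "M = (\<Sum>m\<in>poly_supp C. sum_list (fst m) + sum_list (snd m))"
  have Mb: "\<forall>m\<in>poly_supp C. \<forall>p<k. fst m ! p \<le> M \<and> snd m ! p \<le> M"
  proof (intro ballI allI impI)
    fix m p assume m: "m \<in> poly_supp C" and p: "p < k"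
    have len: "length (fst m) = k" "length (snd m) = k"
      using m poly unfolding is_poly2k_def poly_supp_def by (auto simp del: prod.collapse) (metis prod.collapse)+
    have le: "sum_list (fst m) + sum_list (snd m) \<le> M" unfolding M_def
      by (rule member_le_sum[where f = "\<lambda>m. sum_list (fst m) + sum_list (snd m)"]) (use m fin in auto)
    have "fst m ! p \<le> sum_list (fst m)" using p len by (intro elem_le_sum_list) auto
    moreover have "snd m ! p \<le> sum_list (snd m)" using p len by (intro elem_le_sum_list) auto
    ultimately show "fst m ! p \<le> M \<and> snd m ! p \<le> M" using le by linarith
  qed
  define T where "T = LK M k \<times> LK M k"
  define F where "F bg n = taylor_coeff \<theta>1 k C bg *
     (\<Prod>p<k. (Dop c ^^ (fst bg ! p)) \<alpha> n * cnj ((Dop c ^^ (snd bg ! p)) \<alpha> n))" for bg n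
  have phiF: "phi2k k \<alpha> C n = (\<Sum>bg\<in>T. F bg n)" for n
    unfolding T_def F_def c_def by (rule phi_expand[OF Mb])
  have finT: "finite T" unfolding T_def using finite_LK by simp
  define Sset where "Sset = {(\<Sum>p<k. min (b ! p) d + min (g ! p) d) | b g.
       length b = k \<and> length g = k \<and> taylor_coeff \<theta>1 k C (b, g) \<noteq> 0}"
  have L2k_eq: "L2k \<theta>1 d k C = Min Sset" unfolding L2k_def Sset_def by simp
  have finS: "finite Sset"
  proof (rule finite_subset[of _ "{..2*k*d}"])
    show "Sset \<subseteq> {..2*k*d}"
    proof
      fix x assume "x \<in> Sset"
      then obtain b g where x: "x = (\<Sum>p<k. min (b ! p) d + min (g ! p) d)" unfolding Sset_def by auto
      have "x \<le> (\<Sum>p<k. d + d)" unfolding x by (intro sum_mono add_mono) auto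
      also have "\<dots> = 2*k*d" by simp
      finally show "x \<in> {..2*k*d}" by simp
    qed
  qed simp
  have FS: "summable (\<lambda>n. norm (F bg n))" if bg: "bg \<in> T" for bg
  proof (cases "taylor_coeff \<theta>1 k C bg = 0")
    case True
    then show ?thesis unfolding F_def by simp
  next
    case False
    obtain b g where bg': "bg = (b, g)" by (cases bg)
    have len: "length b = k" "length g = k" using bg unfolding T_def LK_def bg' by auto
    define v where "v = (\<Sum>p<k. min (b ! p) d + min (g ! p) d)"
    have "v \<in> Sset" unfolding Sset_def v_def using len False bg' by auto
    then have "L2k \<theta>1 d k C \<le> v" unfolding L2k_eq using finS by simp
    then have "int (L2k \<theta>1 d k C) \<le> int v" by simp
    with Lc have "int (2*d+2) \<le> int (v + 2*k)" by simp
    then have vk: "v + 2 * k \<ge> 2 * d + 2" by (simp only: of_nat_le_iff)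
    have "(\<Sum>p<k. real (min (b!p) d + 1) + real (min (g!p) d + 1)) = real (\<Sum>p<k. (min (b!p) d + 1) + (min (g!p) d + 1))"
      by simp
    also have "(\<Sum>p<k. (min (b!p) d + 1) + (min (g!p) d + 1)) = v + 2 * k"
      unfolding v_def by (induct k) auto
    finally have W: "(\<Sum>p<k. real (min (b!p) d + 1) + real (min (g!p) d + 1)) \<ge> real (2*d+2)"
      using vk by simp
    have "summable (\<lambda>n. norm (\<Prod>p<k. (Dop c ^^ (b!p)) \<alpha> n * cnj ((Dop c ^^ (g!p)) \<alpha> n)))"
      by (rule term_summable[OF k sj W])
    then have "summable (\<lambda>n. norm (taylor_coeff \<theta>1 k C bg) * norm (\<Prod>p<k. (Dop c ^^ (b!p)) \<alpha> n * cnj ((Dop c ^^ (g!p)) \<alpha> n)))"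
      by (rule summable_mult)
    then show ?thesis unfolding F_def bg' by (simp add: norm_mult)
  qed
  define B where "B = (\<Sum>bg\<in>T. suminf (\<lambda>n. norm (F bg n)))"
  have "norm (\<Sum>n\<le>N. phi2k k \<alpha> C n) \<le> B" for N
  proof -
    have "norm (\<Sum>n\<le>N. phi2k k \<alpha> C n) \<le> (\<Sum>n\<le>N. norm (phi2k k \<alpha> C n))" by (rule norm_sum)
    also have "\<dots> \<le> (\<Sum>n\<le>N. \<Sum>bg\<in>T. norm (F bg n))"
      unfolding phiF by (intro sum_mono norm_sum)
    also have "\<dots> = (\<Sum>bg\<in>T. \<Sum>n\<le>N. norm (F bg n))" by (rule sum.swap)
    also have "\<dots> \<le> B" unfolding B_def
      by (intro sum_mono sum_le_suminf FS) auto
    finally show ?thesis .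
  qed
  then show ?thesis by blast
qed

end
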